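(* Let $G$ be a directed graph in which every vertex is reachable from a vertex $s$, let $t$ be a vertex of $G$, and let $k\ge 1$ be an integer. Assume that for no $\ell\in\{k,\dots,2k-1\}$ does $G$ contain an $(s,t)$-path of length exactly $dist_G(s,t)+\ell$, and that $G$ contains an $(s,t)$-path of length at least $dist_G(s,t)+k$; let $P$ be such a path of minimum length. For $i\ge0$ let $L_i$ be the set of vertices at distance exactly $i$ from $s$. Let $p$ be the smallest integer $i\ge1$ such that $L_i$ contains more than one vertex of $P$, and let $u,v$ be the first and second vertices of $P$ (in order along $P$) lying in $L_p$. Let $x$ be the vertex of $P_{u,v}$ such that $P_{u,x}$ has length exactly $k$ (the path $P_{u,v}$ has more than $k$ edges). Let $k''=\min\{2k+1,|V(P_{v,t})|\}$ and let $z$ be the last vertex of the subpath of $P_{v,t}$ formed by its first $k''$ vertices. Let $P'$ be a path of length at most $k$ from $u$ to $x$ in the induced subgraph $G[\bigcup_{i\ge p}L_i]$. Then every vertex of $P_{v,t}$ that belongs to $P'$ lies on the subpath $P_{v,z}$.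
   Context: Paths are simple directed paths; the length of a path is its number of edges. $dist_G(a,b)$ denotes the length of a shortest directed $(a,b)$-path in $G$. For a path $P$ and vertices $a,b$ on it (with $a$ before $b$), $P_{a,b}$ denotes the subpath of $P$ from $a$ to $b$. *)

theory Defs
  imports Main
begin

definition is_path :: "'a set \<Rightarrow> ('a \<times> 'a) set \<Rightarrow> 'a list \<Rightarrow> bool" where
  "is_path V E xs \<longleftrightarrow> xs \<noteq> [] \<and> distinct xs \<and> set xs \<subseteq> V \<and>
     (\<forall>i. Suc i < length xs \<longrightarrow> (xs ! i, xs ! Suc i) \<in> E)"

definition is_walk_path :: "'a set \<Rightarrow> ('a \<times> 'a) set \<Rightarrow> 'a \<Rightarrow> 'a \<Rightarrow> 'a list \<Rightarrow> bool" where
  "is_walk_path V E a b xs \<longleftrightarrow> is_path V E xs \<and> hd xs = a \<and> last xs = b"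

definition plen :: "'a list \<Rightarrow> nat" where
  "plen xs = length xs - 1"

definition dist :: "'a set \<Rightarrow> ('a \<times> 'a) set \<Rightarrow> 'a \<Rightarrow> 'a \<Rightarrow> nat" where
  "dist V E a b = (LEAST n. \<exists>xs. is_walk_path V E a b xs \<and> plen xs = n)"

definition layer :: "'a set \<Rightarrow> ('a \<times> 'a) set \<Rightarrow> 'a \<Rightarrow> nat \<Rightarrow> 'a set" where
  "layer V E s i = {w \<in> V. dist V E s w = i}"

definition induced_arcs :: "('a \<times> 'a) set \<Rightarrow> 'a set \<Rightarrow> ('a \<times> 'a) set" where
  "induced_arcs E W = E \<inter> (W \<times> W)"

end

theory Submission
  imports Defs
begin

lemma path_take: "is_path V E xs \<Longrightarrow> 0 < n \<Longrightarrow> is_path V E (take n xs)"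
  unfolding is_path_def by (auto dest: in_set_takeD)

lemma path_drop: "is_path V E xs \<Longrightarrow> n < length xs \<Longrightarrow> is_path V E (drop n xs)"
  unfolding is_path_def by (auto dest: in_set_dropD)

lemma path_app:
  assumes "is_path V E xs" "is_path V E ys" "(last xs, hd ys) \<in> E" "set xs \<inter> set ys = {}"
  shows "is_path V E (xs @ ys)"
  unfolding is_path_def
proof (intro conjI allI impI)
  show "xs @ ys \<noteq> []" using assms(1) by (simp add: is_path_def)
  show "distinct (xs @ ys)" using assms by (simp add: is_path_def)
  show "set (xs @ ys) \<subseteq> V" using assms by (simp add: is_path_def)
  fix i assume i: "Suc i < length (xs @ ys)"
  have xs: "xs \<noteq> []" "\<forall>i. Suc i < length xs \<longrightarrow> (xs ! i, xs ! Suc i) \<in> E"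
    using assms(1) by (auto simp: is_path_def)
  have ys: "ys \<noteq> []" "\<forall>i. Suc i < length ys \<longrightarrow> (ys ! i, ys ! Suc i) \<in> E"
    using assms(2) by (auto simp: is_path_def)
  consider "Suc i < length xs" | "Suc i = length xs" | "Suc i > length xs" by linarith
  then show "((xs @ ys) ! i, (xs @ ys) ! Suc i) \<in> E"
  proof cases
    case 1 then show ?thesis using xs by (simp add: nth_append)
  next
    case 2
    then have "i = length xs - 1" by simp
    then show ?thesis using 2 assms(3) xs ys
      by (simp add: nth_append last_conv_nth hd_conv_nth)
  next
    case 3
    then have "Suc (i - length xs) < length ys" using i by simp
    then have "(ys ! (i - length xs), ys ! Suc (i - length xs)) \<in> E" using ys by blast
    moreover have "Suc i - length xs = Suc (i - length xs)" using 3 by simp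
    ultimately show ?thesis using 3 by (simp add: nth_append)
  qed
qed

lemma dist_le: "is_walk_path V E a b q \<Longrightarrow> dist V E a b \<le> plen q"
  unfolding dist_def by (rule Least_le) blast

lemma dist_ex: "\<exists>q. is_walk_path V E a b q \<Longrightarrow> \<exists>q. is_walk_path V E a b q \<and> plen q = dist V E a b"
  unfolding dist_def by (rule LeastI_ex) blast

lemma walk_take:
  assumes "is_walk_path V E a b q" "i < length q"
  shows "is_walk_path V E a (q ! i) (take (Suc i) q) \<and> plen (take (Suc i) q) = i"
proof -
  have l: "length (take (Suc i) q) = Suc i" using assms(2) by simp
  have "last (take (Suc i) q) = q ! i" using assms(2)
    by (subst last_conv_nth) (auto simp: l)
  moreover have "hd (take (Suc i) q) = a" using assms by (auto simp: is_walk_path_def is_path_def)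
  moreover have "is_path V E (take (Suc i) q)" using assms path_take[of V E q "Suc i"] by (auto simp: is_walk_path_def)
  ultimately show ?thesis using l by (simp add: is_walk_path_def plen_def)
qed

lemma dist_self: "a \<in> V \<Longrightarrow> dist V E a a = 0"
proof -
  assume "a \<in> V"
  then have "is_walk_path V E a a [a]" by (simp add: is_walk_path_def is_path_def)
  then have "dist V E a a \<le> plen [a]" by (rule dist_le)
  then show ?thesis by (simp add: plen_def)
qed

lemma dist_zero: "\<exists>q. is_walk_path V E a b q \<Longrightarrow> dist V E a b = 0 \<Longrightarrow> b = a"
proof -
  assume "\<exists>q. is_walk_path V E a b q" "dist V E a b = 0"
  then obtain q where "is_walk_path V E a b q" "plen q = 0" using dist_ex by metis
  then show ?thesis
    by (cases q) (auto simp: is_walk_path_def plen_def is_path_def)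
qed

lemma dist_lip:
  assumes "\<exists>q. is_walk_path V E s a q" "(a, b) \<in> E" "E \<subseteq> V \<times> V"
  shows "dist V E s b \<le> dist V E s a + 1"
proof -
  obtain q where q: "is_walk_path V E s a q" "plen q = dist V E s a" using dist_ex[OF assms(1)] by blast
  show ?thesis
  proof (cases "b \<in> set q")
    case True
    then obtain i where i: "i < length q" "q ! i = b" by (auto simp: in_set_conv_nth)
    from walk_take[OF q(1) i(1)] i have "dist V E s b \<le> i" using dist_le by metis
    then show ?thesis using i q by (simp add: plen_def)
  next
    case False
    have "is_path V E [b]" using assms(2,3) by (auto simp: is_path_def)
    moreover have "last q = a" "q \<noteq> []" "hd q = s" "is_path V E q" using q by (auto simp: is_walk_path_def is_path_def)
    ultimately have "is_path V E (q @ [b])" using path_app[of V E q "[b]"] assms(2) False by auto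
    then have "is_walk_path V E s b (q @ [b])" using \<open>q \<noteq> []\<close> \<open>hd q = s\<close> by (simp add: is_walk_path_def)
    then have "dist V E s b \<le> plen (q @ [b])" by (rule dist_le)
    then show ?thesis using q \<open>q \<noteq> []\<close> by (simp add: plen_def)
  qed
qed

lemma path_mono: "is_path V E' xs \<Longrightarrow> E' \<subseteq> E \<Longrightarrow> is_path V E xs"
  unfolding is_path_def by blast

lemma walk_butlast:
  assumes "is_walk_path V E s y S" "plen S \<ge> 1"
  shows "is_path V E (butlast S) \<and> (last (butlast S), y) \<in> E \<and> hd (butlast S) = s
    \<and> length (butlast S) = plen S"
proof -
  have S: "is_path V E S" "hd S = s" "last S = y" "S \<noteq> []" using assms(1) by (auto simp: is_walk_path_def is_path_def)
  have len: "length S \<ge> 2" using assms(2) by (simp add: plen_def)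
  have bl: "butlast S = take (length S - 1) S" by (simp add: butlast_conv_take)
  have p1: "is_path V E (butlast S)" using path_take[OF S(1), of "length S - 1"] len bl by simp
  have lb: "length (butlast S) = length S - 1" by simp
  then have ne: "butlast S \<noteq> []" using len by (metis One_nat_def Suc_n_not_le_n diff_is_0_eq length_0_conv numeral_2_eq_2 zero_less_diff not_less_eq_eq)
  have "last (butlast S) = S ! (length S - 2)" using len ne
    by (subst last_conv_nth) (auto simp: nth_butlast numeral_2_eq_2)
  moreover have "y = S ! Suc (length S - 2)"
  proof -
    have "Suc (length S - 2) = length S - 1" using len by arith
    then show ?thesis using S by (simp add: last_conv_nth)
  qed
  moreover have "\<forall>i. Suc i < length S \<longrightarrow> (S ! i, S ! Suc i) \<in> E" using S(1) by (simp add: is_path_def)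
  moreover have "Suc (length S - 2) < length S" using len by arith
  ultimately have "(last (butlast S), y) \<in> E" by simp
  moreover have "hd (butlast S) = s" using S ne by (metis append_butlast_last_id hd_append2)
  ultimately show ?thesis using p1 by (simp add: plen_def)
qed

lemma butlast_dist:
  assumes "is_walk_path V E s y S" "z \<in> set (butlast S)"
  shows "dist V E s z < plen S"
proof -
  obtain i where i: "i < length (butlast S)" "z = butlast S ! i" using assms(2) by (auto simp: in_set_conv_nth)
  then have "z = S ! i" "i < length S" by (auto simp: nth_butlast)
  then have "dist V E s z \<le> i" using walk_take[OF assms(1)] dist_le by metis
  then show ?thesis using i by (simp add: plen_def)
qed

theorem lemma3:
  fixes V :: "'a set" and E :: "('a \<times> 'a) set" and s t :: 'a and k :: nat
    and P P' :: "'a list" and p iu iv ix :: nat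
  assumes graph: "finite V" "E \<subseteq> V \<times> V"
    and st: "s \<in> V" "t \<in> V"
    and reach: "\<forall>w\<in>V. \<exists>q. is_walk_path V E s w q"
    and k: "k \<ge> 1"
    and gap: "\<forall>l\<in>{k..2*k-1}. \<not> (\<exists>q. is_walk_path V E s t q \<and> plen q = dist V E s t + l)"
    and P: "is_walk_path V E s t P" "plen P \<ge> dist V E s t + k"
    and P_min: "\<forall>q. is_walk_path V E s t q \<and> plen q \<ge> dist V E s t + k \<longrightarrow> plen P \<le> plen q"
    and p: "p \<ge> 1" "card (layer V E s p \<inter> set P) > 1"
      "\<forall>i. 1 \<le> i \<and> i < p \<longrightarrow> card (layer V E s i \<inter> set P) \<le> 1"
    and uv: "iu < iv" "iv < length P" "P ! iu \<in> layer V E s p" "P ! iv \<in> layer V E s p"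
      "\<forall>j<iv. j \<noteq> iu \<longrightarrow> P ! j \<notin> layer V E s p"
    and x: "iu \<le> ix" "ix \<le> iv" "ix - iu = k"
    and P': "is_walk_path V (induced_arcs E (\<Union>i\<in>{p..}. layer V E s i)) (P ! iu) (P ! ix) P'"
      "set P' \<subseteq> (\<Union>i\<in>{p..}. layer V E s i)" "plen P' \<le> k"
  shows "\<forall>w\<in>set (drop iv P). w \<in> set P' \<longrightarrow>
           w \<in> set (take (min (2*k+1) (length (drop iv P))) (drop iv P))"
proof (intro ballI impI)
  define D where "D w = dist V E s w" for w
  have Pp: "is_path V E P" "hd P = s" "last P = t" "P \<noteq> []" "distinct P" "set P \<subseteq> V"
    "\<forall>i. Suc i < length P \<longrightarrow> (P ! i, P ! Suc i) \<in> E"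
    using P(1) by (auto simp: is_walk_path_def is_path_def)
  have P0: "P ! 0 = s" using Pp by (simp add: hd_conv_nth)
  have PV: "\<And>i. i < length P \<Longrightarrow> P ! i \<in> V" using Pp(6) by auto
  have Du: "D (P ! iu) = p" and Dv: "D (P ! iv) = p" using uv(3,4) by (auto simp: layer_def D_def)
  have ivt: "\<forall>q \<le> D (P ! n). \<exists>i \<le> n. D (P ! i) = q" if "n < length P" for n
    using that
  proof (induction n)
    case 0
    then show ?case using P0 dist_self[OF st(1), of E] by (auto simp: D_def)
  next
    case (Suc n)
    have "D (P ! Suc n) \<le> D (P ! n) + 1"
      unfolding D_def by (rule dist_lip) (use reach PV Suc.prems Pp(7) graph(2) in auto)
    show ?case
    proof (intro allI impI)
      fix q assume q: "q \<le> D (P ! Suc n)"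
      show "\<exists>i \<le> Suc n. D (P ! i) = q"
      proof (cases "q \<le> D (P ! n)")
        case True
        then obtain i where "i \<le> n" "D (P ! i) = q" using Suc by auto
        then show ?thesis by (intro exI[of _ i]) auto
      next
        case False
        then have "q = D (P ! Suc n)" using q \<open>D (P ! Suc n) \<le> D (P ! n) + 1\<close> by simp
        then show ?thesis by blast
      qed
    qed
  qed
  have high: "p \<le> D (P ! r)" if r: "iu < r" "r < length P" for r
  proof (rule ccontr)
    assume "\<not> p \<le> D (P ! r)"
    then have lt: "D (P ! r) < p" by simp
    show False
    proof (cases "D (P ! r) = 0")
      case True
      then have "P ! r = s" using dist_zero reach PV[OF r(2)] by (metis D_def)
      then have "P ! r = P ! 0" using P0 by simp
      then show False using Pp(5) r nth_eq_iff_index_eq by fastforce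
    next
      case False
      have iul: "iu < length P" using uv by simp
      have "D (P ! r) \<le> D (P ! iu)" using lt Du by simp
      then obtain i where i: "i \<le> iu" "D (P ! i) = D (P ! r)" using ivt[OF iul] by blast
      have ne: "P ! i \<noteq> P ! r" using Pp(5) r i nth_eq_iff_index_eq by fastforce
      let ?L = "layer V E s (D (P ! r)) \<inter> set P"
      have "{P ! i, P ! r} \<subseteq> ?L" using i r uv PV by (auto simp: layer_def D_def)
      then have "card {P ! i, P ! r} \<le> card ?L" by (intro card_mono) auto
      then have "card ?L \<ge> 2" using ne by simp
      moreover have "card ?L \<le> 1" using p(3) False lt by (simp add: D_def)
      ultimately show False by linarith
    qed
  qed
  have iup: "p \<le> iu"
  proof -
    have iul: "iu < length P" using uv by simp
    have "is_walk_path V E s (P ! iu) (take (Suc iu) P) \<and> plen (take (Suc iu) P) = iu"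
      by (rule walk_take[OF P(1) iul])
    then have "dist V E s (P ! iu) \<le> iu" using dist_le by metis
    then show ?thesis using Du by (simp add: D_def)
  qed
  obtain Su where Su: "is_walk_path V E s (P ! iu) Su" "plen Su = p"
    using dist_ex[of V E s "P ! iu"] reach PV uv Du by (auto simp: D_def)
  obtain Sv where Sv: "is_walk_path V E s (P ! iv) Sv" "plen Sv = p"
    using dist_ex[of V E s "P ! iv"] reach PV uv Dv by (auto simp: D_def)
  fix w assume w: "w \<in> set (drop iv P)" "w \<in> set P'"
  show "w \<in> set (take (min (2*k+1) (length (drop iv P))) (drop iv P))"
  proof (rule ccontr)
    assume nw: "w \<notin> set (take (min (2*k+1) (length (drop iv P))) (drop iv P))"
    obtain r0 where r0: "r0 < length (drop iv P)" "w = drop iv P ! r0" using w(1) by (auto simp: in_set_conv_nth)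
    have "\<not> r0 < 2*k+1"
    proof
      assume "r0 < 2*k+1"
      then have "w = take (min (2*k+1) (length (drop iv P))) (drop iv P) ! r0" using r0 by simp
      moreover have "r0 < length (take (min (2*k+1) (length (drop iv P))) (drop iv P))" using r0 \<open>r0 < 2*k+1\<close> by simp
      ultimately show False using nw nth_mem by metis
    qed
    then have r0b: "iv + 2*k < iv + r0" "iv + r0 < length P" "w = P ! (iv + r0)" using r0 by auto
    obtain c0 where c0: "c0 < length P'" "P' ! c0 = w" using w(2) by (auto simp: in_set_conv_nth)
    define Q where "Q c = (c < length P' \<and> (\<exists>r. iv + 2*k < r \<and> r < length P \<and> P' ! c = P ! r))" for c
    have Qc0: "Q c0" unfolding Q_def using c0 r0b by blast
    define b where "b = (LEAST c. Q c)"
    have Qb: "Q b" unfolding b_def by (rule LeastI[of Q, OF Qc0])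
    have notQ: "\<And>c. c < b \<Longrightarrow> \<not> Q c" unfolding b_def by (rule not_less_Least)
    obtain r where r: "iv + 2*k < r" "r < length P" "P' ! b = P ! r" and bl: "b < length P'" using Qb Q_def by blast
    have P'p: "is_path V E P'" "hd P' = P ! iu" "last P' = P ! ix" "P' \<noteq> []" "distinct P'" "set P' \<subseteq> V"
      "\<forall>i. Suc i < length P' \<longrightarrow> (P' ! i, P' ! Suc i) \<in> E"
      using P'(1) path_mono[of V "induced_arcs E (\<Union>i\<in>{p..}. layer V E s i)" P' E]
      by (auto simp: is_walk_path_def is_path_def induced_arcs_def)
    have DP': "p \<le> D z" if "z \<in> set P'" for z using P'(2) that by (auto simp: layer_def D_def)
    have b0: "b \<noteq> 0"
    proof
      assume "b = 0"
      then have "P ! iu = P ! r" using r P'p by (simp add: hd_conv_nth)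
      then show False using Pp(5) r uv nth_eq_iff_index_eq by fastforce
    qed
    have bk: "b \<le> k" using bl P'(3) by (simp add: plen_def)
    have kk: "iu + k \<le> iv" using x by simp
    have dropD: "p \<le> D z" if zn: "z \<in> set (drop n P)" "iu < n" for z n
    proof -
      obtain i where "i < length (drop n P)" "z = drop n P ! i" using zn(1) by (auto simp: in_set_conv_nth)
      then have "z = P ! (n + i)" "n + i < length P" by auto
      then show ?thesis using high zn(2) by simp
    qed
    have Sv2: "is_path V E (butlast Sv)" "(last (butlast Sv), P ! iv) \<in> E" "hd (butlast Sv) = s"
      "length (butlast Sv) = p"
      using walk_butlast[OF Sv(1)] Sv(2) p(1) by auto
    have Su2: "is_path V E (butlast Su)" "(last (butlast Su), P ! iu) \<in> E" "hd (butlast Su) = s"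
      "length (butlast Su) = p"
      using walk_butlast[OF Su(1)] Su(2) p(1) by auto
    have bnz: "butlast Sv \<noteq> []" "butlast Su \<noteq> []" using Sv2(4) Su2(4) p(1) by (metis le_numeral_extra(2) list.size(3))+
    define Q1 where "Q1 = butlast Sv @ drop iv P"
    have dv: "is_path V E (drop iv P)" "hd (drop iv P) = P ! iv" "last (drop iv P) = t"
      using path_drop[OF Pp(1) uv(2)] uv(2) Pp(3) by (auto simp: hd_drop_conv_nth)
    have disj1: "set (butlast Sv) \<inter> set (drop iv P) = {}"
    proof -
      { fix z assume "z \<in> set (butlast Sv)" "z \<in> set (drop iv P)"
        then have "D z < p" "p \<le> D z" using butlast_dist[OF Sv(1)] Sv(2) dropD uv(1) by (auto simp: D_def)
        then have False by simp }
      then show ?thesis by blast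
    qed
    have Q1p: "is_path V E Q1" unfolding Q1_def
      using path_app[OF Sv2(1) dv(1)] Sv2(2) dv(2) disj1 by simp
    have Q1w: "is_walk_path V E s t Q1" using Q1p Sv2(3) bnz dv(3) uv(2)
      by (simp add: is_walk_path_def Q1_def)
    have Q1l: "plen Q1 = p + (length P - iv) - 1" using Sv2(4) by (simp add: Q1_def plen_def)
    have "plen Q1 < plen P" using Q1l iup kk k uv(2) by (simp add: plen_def)
    then have Q1d: "plen Q1 < dist V E s t + k" using P_min Q1w by force
    define R where "R = take b P' @ drop r P"
    have tb: "is_path V E (take b P')" "hd (take b P') = P ! iu" "last (take b P') = P' ! (b - 1)"
      "length (take b P') = b"
      using path_take[OF P'p(1), of b] b0 bl P'p(2,4)
      by (auto simp: hd_conv_nth last_conv_nth)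
    have dr: "is_path V E (drop r P)" "hd (drop r P) = P ! r" "last (drop r P) = t"
      using path_drop[OF Pp(1) r(2)] r(2) Pp(3) by (auto simp: hd_drop_conv_nth)
    have arcb: "(P' ! (b - 1), P' ! Suc (b - 1)) \<in> E" proof -
      have "Suc (b - 1) < length P'" using b0 bl by simp
      then show ?thesis using P'p(7) by blast
    qed
    have disj2: "set (take b P') \<inter> set (drop r P) = {}"
    proof -
      { fix z assume z: "z \<in> set (take b P')" "z \<in> set (drop r P)"
        obtain c where c: "c < b" "z = P' ! c" using z(1) bl by (auto simp: in_set_conv_nth)
        obtain i where i: "i < length (drop r P)" "z = drop r P ! i" using z(2) by (auto simp: in_set_conv_nth)
        then have "z = P ! (r + i)" "r + i < length P" by auto
        then have "Q c" unfolding Q_def using c bl r(1) by (intro conjI exI[of _ "r + i"]) auto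
        then have False using notQ c by blast }
      then show ?thesis by blast
    qed
    have Rp: "is_path V E R" unfolding R_def
      using path_app[OF tb(1) dr(1)] tb(3) dr(2) arcb r(3) b0 disj2 by simp
    have Rh: "hd R = P ! iu"
    proof -
      have "take b P' \<noteq> []" using tb(4) b0 by auto
      then show ?thesis using tb(2) by (simp add: R_def)
    qed
    have Rl: "last R = t" using dr(3) r(2) by (simp add: R_def)
    have disj3: "set (butlast Su) \<inter> set R = {}"
    proof -
      { fix z assume z: "z \<in> set (butlast Su)" "z \<in> set R"
        have "D z < p" using butlast_dist[OF Su(1) z(1)] Su(2) by (simp add: D_def)
        moreover have "p \<le> D z"
        proof -
          have "z \<in> set (take b P') \<or> z \<in> set (drop r P)" using z(2) by (simp add: R_def)
          then show ?thesis
          proof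
            assume "z \<in> set (take b P')"
            then show ?thesis using DP' in_set_takeD by metis
          next
            assume "z \<in> set (drop r P)"
            then show ?thesis using dropD r(1) uv(1) by simp
          qed
        qed
        ultimately have False by simp }
      then show ?thesis by blast
    qed
    define Q2 where "Q2 = butlast Su @ R"
    have Q2p: "is_path V E Q2" unfolding Q2_def
      using path_app[OF Su2(1) Rp] Su2(2) Rh disj3 by simp
    have Rne: "R \<noteq> []" using Rp by (simp add: is_path_def)
    have Q2w: "is_walk_path V E s t Q2" using Q2p Su2(3) bnz Rl Rne
      by (simp add: is_walk_path_def Q2_def)
    have Q2l: "plen Q2 = p + b + (length P - r) - 1" using Su2(4) tb(4) by (simp add: Q2_def R_def plen_def)
    have "dist V E s t \<le> plen Q2" by (rule dist_le[OF Q2w])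
    then show False using Q1d Q1l Q2l bk r uv(2) by linarith
  qed
qed

end
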